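(* Let $(\Omega,\mathcal{F},\mathbb{P})$ be a probability space and $\mathcal{X}\subseteq\mathbb{L}^0$. Then either $\mathcal{X}$ fails to be uniformly $\mathbb{Q}$-integrable for every probability $\mathbb{Q}\ll\mathbb{P}$, or there exists a probability $\mathbb{Q}_{\mathcal{X}}\ll\mathbb{P}$ such that (i) $\mathcal{X}$ is uniformly $\mathbb{Q}_{\mathcal{X}}$-integrable, and (ii) whenever a probability $\mathbb{Q}\ll\mathbb{P}$ is singular to $\mathbb{Q}_{\mathcal{X}}$, $\mathcal{X}$ fails to be uniformly $\mathbb{Q}$-integrable.
   Context: $\mathbb{L}^0$ is the space of (equivalence classes modulo $\mathbb{P}$-null sets of) real-valued random variables. For a probability $\mathbb{Q}\ll\mathbb{P}$, $\mathcal{X}\subseteq\mathbb{L}^0$ is uniformly $\mathbb{Q}$-integrable if $\lim_{n\to\infty}\sup_{X\in\mathcal{X}}\mathbb{E}_{\mathbb{Q}}[|X|\mathbb{I}_{\{|X|>n\}}]=0$. *)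

theory Defs
  imports "HOL-Probability.Probability"
begin

definition prob_abs_cont :: "'a measure \<Rightarrow> 'a measure \<Rightarrow> bool" where
  "prob_abs_cont P Q \<longleftrightarrow> prob_space Q \<and> sets Q = sets P \<and> absolutely_continuous P Q"

definition mutually_singular :: "'a measure \<Rightarrow> 'a measure \<Rightarrow> bool" where
  "mutually_singular Q R \<longleftrightarrow>
     (\<exists>A \<in> sets Q. emeasure Q A = 0 \<and> emeasure R (space R - A) = 0)"

definition unif_integrable :: "'a measure \<Rightarrow> ('a \<Rightarrow> real) set \<Rightarrow> bool" where
  "unif_integrable Q XX \<longleftrightarrow>
     ((\<lambda>n::nat. SUP X\<in>XX. \<integral>\<^sup>+ \<omega>. ennreal \<bar>X \<omega>\<bar> * indicator {\<omega>. \<bar>X \<omega>\<bar> > real n} \<omega> \<partial>Q)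
        \<longlonglongrightarrow> 0)"

end

theory Submission
  imports Defs
begin

definition tailf :: "('a \<Rightarrow> real) \<Rightarrow> nat \<Rightarrow> 'a \<Rightarrow> ennreal" where
  "tailf X m \<omega> = ennreal \<bar>X \<omega>\<bar> * indicator {\<omega>. \<bar>X \<omega>\<bar> > real m} \<omega>"

lemma tailf_meas[measurable]: assumes [measurable]: "X \<in> borel_measurable M" shows "tailf X m \<in> borel_measurable M"
  unfolding tailf_def indicator_def of_bool_def by measurable

lemma tailf_mono: "m \<le> m' \<Longrightarrow> tailf X m' \<omega> \<le> tailf X m \<omega>"
  unfolding tailf_def indicator_def by auto

lemma tailf_0: "tailf X 0 \<omega> \<le> tailf X m \<omega> + of_nat m"
proof (cases "\<bar>X \<omega>\<bar> > real m")
  case True thus ?thesis unfolding tailf_def indicator_def by auto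
next
  case False
  hence "ennreal \<bar>X \<omega>\<bar> \<le> of_nat m" by (simp add: ennreal_of_nat_eq_real_of_nat)
  thus ?thesis unfolding tailf_def indicator_def by (auto intro: order_trans)
qed

lemma ui_tailf: "unif_integrable Q XX \<longleftrightarrow> ((\<lambda>n. SUP X\<in>XX. \<integral>\<^sup>+ \<omega>. tailf X n \<omega> \<partial>Q) \<longlonglongrightarrow> 0)"
  unfolding unif_integrable_def tailf_def ..

lemma b_finite:
  assumes Q: "prob_space Q" and meas: "\<forall>X\<in>XX. X \<in> borel_measurable Q" and ui: "unif_integrable Q XX"
  shows "(SUP X\<in>XX. \<integral>\<^sup>+ \<omega>. tailf X 0 \<omega> \<partial>Q) < \<infinity>"
proof -
  interpret prob_space Q by fact
  have "\<forall>\<^sub>F n in sequentially. (SUP X\<in>XX. \<integral>\<^sup>+ \<omega>. tailf X n \<omega> \<partial>Q) < 1"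
    using ui unfolding ui_tailf by (rule order_tendstoD) simp
  then obtain m where m: "(SUP X\<in>XX. \<integral>\<^sup>+ \<omega>. tailf X m \<omega> \<partial>Q) < 1"
    by (meson eventually_sequentially order_refl)
  have "(SUP X\<in>XX. \<integral>\<^sup>+ \<omega>. tailf X 0 \<omega> \<partial>Q) \<le> (SUP X\<in>XX. \<integral>\<^sup>+ \<omega>. tailf X m \<omega> \<partial>Q) + of_nat m"
  proof (rule SUP_least)
    fix X assume X: "X \<in> XX"
    have "(\<integral>\<^sup>+ \<omega>. tailf X 0 \<omega> \<partial>Q) \<le> (\<integral>\<^sup>+ \<omega>. tailf X m \<omega> + of_nat m \<partial>Q)"
      by (rule nn_integral_mono) (rule tailf_0)
    also have "\<dots> = (\<integral>\<^sup>+ \<omega>. tailf X m \<omega> \<partial>Q) + of_nat m"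
      using X meas by (subst nn_integral_add) (auto simp: emeasure_space_1)
    also have "\<dots> \<le> (SUP X\<in>XX. \<integral>\<^sup>+ \<omega>. tailf X m \<omega> \<partial>Q) + of_nat m"
      using X by (intro add_right_mono SUP_upper)
    finally show "(\<integral>\<^sup>+ \<omega>. tailf X 0 \<omega> \<partial>Q) \<le> \<dots>" .
  qed
  also have "\<dots> < \<infinity>"
  proof -
    have "(SUP X\<in>XX. \<integral>\<^sup>+ \<omega>. tailf X m \<omega> \<partial>Q) < top" using m by (rule less_trans) simp
    thus ?thesis by (simp only: infinity_ennreal_def ennreal_add_less_top of_nat_less_top simp_thms)
  qed
  finally show ?thesis .
qed

lemma mix:
  fixes f :: "nat \<Rightarrow> 'a \<Rightarrow> ennreal"
  assumes P: "prob_space P" and meas: "\<forall>X\<in>XX. X \<in> borel_measurable P"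
    and fm[measurable]: "\<And>n. f n \<in> borel_measurable P"
    and fp: "\<And>n. prob_space (density P (f n))"
    and fu: "\<And>n. unif_integrable (density P (f n)) XX"
  shows "\<exists>h. h \<in> borel_measurable P \<and> prob_space (density P h) \<and> unif_integrable (density P h) XX
           \<and> (\<forall>n x. 0 < f n x \<longrightarrow> 0 < h x)"
proof -
  interpret P: prob_space P by fact
  define b where "b n m = (SUP X\<in>XX. \<integral>\<^sup>+\<omega>. tailf X m \<omega> \<partial>density P (f n))" for n m
  have bfin: "b n 0 < \<infinity>" for n
    unfolding b_def using b_finite[OF fp _ fu] meas by simp
  define \<beta> where "\<beta> n = enn2real (b n 0)" for n
  have b\<beta>: "b n 0 = ennreal (\<beta> n)" for n using bfin by (simp add: \<beta>_def less_top)
  have \<beta>0: "0 \<le> \<beta> n" for n by (simp add: \<beta>_def)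
  define w where "w n = (1/2::real)^Suc n / (1 + \<beta> n)" for n
  have wpos: "0 < w n" for n using \<beta>0[of n] by (simp add: w_def)
  have wle: "w n \<le> (1/2)^Suc n" for n using \<beta>0[of n] by (simp add: w_def divide_le_eq)
  have wb: "w n * \<beta> n \<le> (1/2)^Suc n" for n
    using \<beta>0[of n] by (simp add: w_def divide_le_eq)
  have sg: "summable (\<lambda>n. (1/2::real)^Suc n)"
    using summable_ignore_initial_segment[OF summable_geometric[of "1/2::real"], of 1] by simp
  have sw: "summable w"
    by (rule summable_comparison_test'[OF sg, of 0]) (use wpos wle in \<open>auto simp: less_imp_le\<close>)
  define s where "s = suminf w"
  have spos: "0 < s" unfolding s_def using sw wpos by (intro suminf_pos) auto
  define c where "c n = ennreal (w n / s)" for n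
  define h where "h x = (\<Sum>n. c n * f n x)" for x
  have hm[measurable]: "h \<in> borel_measurable P" unfolding h_def by measurable
  have intf: "(\<integral>\<^sup>+x. f n x \<partial>P) = 1" for n
  proof -
    interpret Q: prob_space "density P (f n)" by (rule fp)
    have "(\<integral>\<^sup>+x. f n x \<partial>P) = (\<integral>\<^sup>+x. 1 \<partial>density P (f n))"
      using nn_integral_density[OF fm[of n], of "\<lambda>_. 1"] by simp
    also have "\<dots> = 1" using Q.emeasure_space_1 by simp
    finally show ?thesis .
  qed
  have sumc: "(\<Sum>n. c n) = 1"
  proof -
    have "(\<Sum>n. c n) = ennreal (\<Sum>n. w n / s)" unfolding c_def
      using sw spos wpos by (intro suminf_ennreal2) (auto intro: less_imp_le summable_divide)
    also have "(\<Sum>n. w n / s) = 1" using spos sw by (simp add: suminf_divide s_def)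
    finally show ?thesis by simp
  qed
  have inth: "(\<integral>\<^sup>+x. h x * g x \<partial>P) = (\<Sum>n. c n * \<integral>\<^sup>+x. f n x * g x \<partial>P)"
    if [measurable]: "g \<in> borel_measurable P" for g
  proof -
    have "(\<integral>\<^sup>+x. h x * g x \<partial>P) = (\<integral>\<^sup>+x. (\<Sum>n. c n * (f n x * g x)) \<partial>P)"
      unfolding h_def ennreal_suminf_multc[symmetric] by (simp add: mult.assoc)
    also have "\<dots> = (\<Sum>n. \<integral>\<^sup>+x. c n * (f n x * g x) \<partial>P)"
      by (rule nn_integral_suminf) measurable
    also have "\<dots> = (\<Sum>n. c n * \<integral>\<^sup>+x. f n x * g x \<partial>P)"
      by (simp add: nn_integral_cmult)
    finally show ?thesis .
  qed
  have prob: "prob_space (density P h)"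
  proof
    have "emeasure (density P h) (space (density P h)) = (\<integral>\<^sup>+x. h x * indicator (space P) x \<partial>P)"
      by (simp add: emeasure_density)
    also have "\<dots> = (\<integral>\<^sup>+x. h x * 1 \<partial>P)"
      by (rule nn_integral_cong) simp
    also have "\<dots> = 1" using inth[of "\<lambda>_. 1"] intf sumc by simp
    finally show "emeasure (density P h) (space (density P h)) = 1" .
  qed
  define T where "T m = (\<Sum>n. c n * b n m)" for m
  have bound: "(\<integral>\<^sup>+\<omega>. tailf X m \<omega> \<partial>density P h) \<le> T m" if X: "X \<in> XX" for X m
  proof -
    have [measurable]: "X \<in> borel_measurable P" using X meas by auto
    have "(\<integral>\<^sup>+\<omega>. tailf X m \<omega> \<partial>density P h) = (\<Sum>n. c n * \<integral>\<^sup>+x. f n x * tailf X m x \<partial>P)"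
      by (simp add: nn_integral_density inth)
    also have "\<dots> = (\<Sum>n. c n * \<integral>\<^sup>+x. tailf X m x \<partial>density P (f n))"
      by (simp add: nn_integral_density)
    also have "\<dots> \<le> T m" unfolding T_def b_def
      by (intro suminf_le mult_left_mono SUP_upper X) auto
    finally show ?thesis .
  qed
  have decb: "b n m' \<le> b n m" if "m \<le> m'" for n m m'
    unfolding b_def by (intro SUP_mono' nn_integral_mono tailf_mono that)
  have b0: "(\<lambda>m. b n m) \<longlonglongrightarrow> 0" for n
    using fu[of n] unfolding ui_tailf b_def .
  have cb0: "(INF m. c n * b n m) = 0" for n
  proof -
    have "(\<lambda>m. c n * b n m) \<longlonglongrightarrow> c n * 0"
      by (rule ennreal_tendsto_cmult) (auto simp: c_def b0)
    moreover have "decseq (\<lambda>m. c n * b n m)"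
      by (intro decseq_SucI mult_left_mono decb) auto
    ultimately show ?thesis using LIMSEQ_INF LIMSEQ_unique by fastforce
  qed
  have decT: "decseq T" unfolding T_def
    by (intro decseq_SucI suminf_le mult_left_mono decb) auto
  have T0: "T 0 < \<infinity>"
  proof -
    have "T 0 \<le> (\<Sum>n. ennreal ((1/2)^Suc n / s))" unfolding T_def
    proof (intro suminf_le)
      fix n
      have "c n * b n 0 = ennreal (w n * \<beta> n / s)"
        using spos wpos[of n] \<beta>0[of n] by (simp add: c_def b\<beta> ennreal_mult'[symmetric])
      also have "\<dots> \<le> ennreal ((1/2)^Suc n / s)"
        using wb[of n] spos by (intro ennreal_leI divide_right_mono) auto
      finally show "c n * b n 0 \<le> ennreal ((1/2)^Suc n / s)" .
    qed auto
    also have "\<dots> = ennreal (\<Sum>n. (1/2)^Suc n / s)"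
      using sg spos by (intro suminf_ennreal2) (auto intro: summable_divide)
    also have "\<dots> < \<infinity>" by simp
    finally show ?thesis .
  qed
  have infT: "(INF m. T m) = 0"
  proof -
    have "(\<integral>\<^sup>+n. (INF m. c n * b n m) \<partial>count_space UNIV) = (INF m. \<integral>\<^sup>+n. c n * b n m \<partial>count_space UNIV)"
    proof (rule nn_integral_monotone_convergence_INF_decseq)
      show "decseq (\<lambda>m n. c n * b n m)"
        by (intro decseq_SucI le_funI mult_left_mono decb) auto
      fix i
      have "(\<integral>\<^sup>+n. c n * b n i \<partial>count_space UNIV) = T i"
        by (simp add: nn_integral_count_space_nat T_def)
      also have "\<dots> \<le> T 0" using decT by (simp add: decseq_def)
      finally show "(\<integral>\<^sup>+n. c n * b n i \<partial>count_space UNIV) < \<infinity>" using T0 by simp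
    qed simp
    thus ?thesis by (simp add: nn_integral_count_space_nat T_def cb0)
  qed
  have T0lim: "T \<longlonglongrightarrow> 0" using LIMSEQ_INF[OF decT] infT by simp
  have ui: "unif_integrable (density P h) XX"
    unfolding ui_tailf
    by (rule tendsto_sandwich[OF _ _ tendsto_const T0lim]) (auto intro!: always_eventually allI SUP_least bound)
  have supp: "0 < h x" if "0 < f n x" for n x
  proof -
    have "0 < c n * f n x" using that wpos[of n] spos by (simp add: c_def ennreal_zero_less_mult_iff)
    also have "c n * f n x \<le> h x" unfolding h_def
      by (metis ennreal_suminf_lessD not_le order_less_irrefl)
    finally show ?thesis .
  qed
  show ?thesis using hm prob ui supp by blast
qed

theorem proposition2p4:
  fixes P :: "'a measure" and XX :: "('a \<Rightarrow> real) set"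
  assumes "prob_space P"
    and "\<forall>X\<in>XX. X \<in> borel_measurable P"
  shows "(\<forall>Q. prob_abs_cont P Q \<longrightarrow> \<not> unif_integrable Q XX)
    \<or> (\<exists>QX. prob_abs_cont P QX \<and> unif_integrable QX XX \<and>
         (\<forall>Q. prob_abs_cont P Q \<and> mutually_singular Q QX \<longrightarrow> \<not> unif_integrable Q XX))"
proof -
  interpret P: prob_space P by fact
  note meas = assms(2)
  define D where "D = {f. f \<in> borel_measurable P \<and> prob_space (density P f) \<and> unif_integrable (density P f) XX}"
  define v where "v f = emeasure P {x\<in>space P. 0 < f x}" for f :: "'a \<Rightarrow> ennreal"
  have RN: "RN_deriv P Q \<in> borel_measurable P \<and> density P (RN_deriv P Q) = Q" if "prob_abs_cont P Q" for Q
    using that unfolding prob_abs_cont_def by (auto intro: P.density_RN_deriv)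
  have RND: "RN_deriv P Q \<in> D" if "prob_abs_cont P Q" "unif_integrable Q XX" for Q
    using RN[OF that(1)] that unfolding D_def prob_abs_cont_def by auto
  have mixD: "\<exists>h\<in>D. \<forall>n x. 0 < f n x \<longrightarrow> 0 < h x" if "\<And>n. f n \<in> D" for f :: "nat \<Rightarrow> 'a \<Rightarrow> ennreal"
    using mix[OF assms(1) meas, of f] that unfolding D_def by auto
  have vle: "v f \<le> v g" if "\<And>x. x \<in> space P \<Longrightarrow> 0 < f x \<Longrightarrow> 0 < g x" "g \<in> borel_measurable P" for f g
    unfolding v_def using that by (intro emeasure_mono) auto
  show ?thesis
  proof (cases "D = {}")
    case True
    thus ?thesis using RND by blast
  next
    case False
    obtain fs :: "nat \<Rightarrow> ennreal" where fsD: "range fs \<subseteq> v ` D" and c: "(SUP f\<in>D. v f) = (SUP n. fs n)"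
      using ennreal_SUP_countable_SUP[OF False, of v] by blast
    have "\<forall>n. \<exists>f. f \<in> D \<and> v f = fs n"
    proof
      fix n
      have "fs n \<in> v ` D" using fsD by (auto simp del: image_subset_iff)
      thus "\<exists>f. f \<in> D \<and> v f = fs n" by (auto simp del: image_subset_iff)
    qed
    from choice[OF this] obtain g :: "nat \<Rightarrow> 'a \<Rightarrow> ennreal" where g': "\<forall>n. g n \<in> D \<and> v (g n) = fs n"
      by blast
    have g: "\<And>n. g n \<in> D" "\<And>n. v (g n) = fs n" using g' by auto
    obtain h where hD: "h \<in> D" and hsupp: "\<And>n x. 0 < g n x \<Longrightarrow> 0 < h x"
      using mixD[of g] g(1) by blast
    have hm[measurable]: "h \<in> borel_measurable P" using hD by (simp add: D_def)
    have vh: "v h = (SUP f\<in>D. v f)"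
    proof (rule antisym)
      show "v h \<le> (SUP f\<in>D. v f)" using hD by (rule SUP_upper)
      show "(SUP f\<in>D. v f) \<le> v h" unfolding c
        by (rule SUP_least) (use g hsupp hm in \<open>metis vle\<close>)
    qed
    define QX where "QX = density P h"
    have QX: "prob_abs_cont P QX" using hD
      unfolding prob_abs_cont_def QX_def D_def by (auto intro: absolutely_continuousI_density)
    have QXu: "unif_integrable QX XX" using hD unfolding QX_def D_def by auto
    have "\<not> unif_integrable Q XX" if Q: "prob_abs_cont P Q" and sing: "mutually_singular Q QX" for Q
    proof
      assume ui: "unif_integrable Q XX"
      define g0 where "g0 = RN_deriv P Q"
      have g0D: "g0 \<in> D" using RND[OF Q ui] by (simp add: g0_def)
      have g0m[measurable]: "g0 \<in> borel_measurable P" and Qd: "density P g0 = Q"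
        using RN[OF Q] by (auto simp: g0_def)
      obtain k where kD: "k \<in> D" and ksupp: "\<And>n x. 0 < (if n = (0::nat) then g0 else h) x \<Longrightarrow> 0 < k x"
      proof -
        have mem: "\<And>n::nat. (if n = 0 then g0 else h) \<in> D" using g0D hD by simp
        have "\<exists>k\<in>D. \<forall>n x. 0 < (if n = (0::nat) then g0 else h) x \<longrightarrow> 0 < k x"
          by (rule mixD[of "\<lambda>n::nat. if n = 0 then g0 else h", OF mem])
        then show ?thesis using that by blast
      qed
      have km[measurable]: "k \<in> borel_measurable P" using kD by (simp add: D_def)
      have vk: "v k \<le> v h" using kD vh by (auto intro: SUP_upper)
      obtain A where A: "A \<in> sets Q" "emeasure Q A = 0" "emeasure QX (space QX - A) = 0"
        using sing unfolding mutually_singular_def by blast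
      have AP[measurable]: "A \<in> sets P" using A(1) Q by (simp add: prob_abs_cont_def)
      define H where "H = {x\<in>space P. 0 < h x}"
      define B where "B = {x\<in>space P. 0 < g0 x \<and> x \<notin> A}"
      have Hm[measurable]: "H \<in> sets P" unfolding H_def by measurable
      have Bm[measurable]: "B \<in> sets P" unfolding B_def by measurable
      have null: "emeasure P (H - A) = 0"
      proof -
        have "(\<integral>\<^sup>+x. h x * indicator (space P - A) x \<partial>P) = 0"
          using A(3) by (simp add: QX_def emeasure_density)
        hence "AE x in P. h x * indicator (space P - A) x = 0"
          by (subst (asm) nn_integral_0_iff_AE) auto
        hence "AE x in P. \<not> (x \<in> H - A)"
          by eventually_elim (auto simp: H_def indicator_def)
        thus ?thesis by (subst (asm) AE_iff_measurable[of "H - A"]) (auto simp: H_def zero_less_iff_neq_zero)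
      qed
      have Bpos: "0 < emeasure P B"
      proof (rule ccontr)
        assume "\<not> 0 < emeasure P B"
        hence B0: "emeasure P B = 0" by simp
        have "AE x in P. x \<notin> B" using B0 AE_iff_measurable[of B P "\<lambda>x. x \<notin> B"] by (auto simp: B_def zero_less_iff_neq_zero)
        hence "AE x in P. g0 x * indicator (space P - A) x = 0"
          by eventually_elim (auto simp: B_def indicator_def zero_less_iff_neq_zero)
        hence "(\<integral>\<^sup>+x. g0 x * indicator (space P - A) x \<partial>P) = 0"
          by (subst nn_integral_0_iff_AE) auto
        moreover have "emeasure (density P g0) (space P - A) = (\<integral>\<^sup>+x. g0 x * indicator (space P - A) x \<partial>P)"
          by (rule emeasure_density) auto
        ultimately have "emeasure (density P g0) (space P - A) = 0" by (rule trans[rotated])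
        hence "emeasure Q (space P - A) = 0" by (simp only: Qd)
        moreover have "emeasure Q (space P - A) = 1"
        proof -
          have Qprob: "prob_space Q" and Qs: "sets Q = sets P" using Q unfolding prob_abs_cont_def by auto
          have sp: "space Q = space P" using Qs by (rule sets_eq_imp_space_eq)
          have "emeasure Q (space Q - A) = emeasure Q (space Q) - emeasure Q A"
            by (rule emeasure_compl[OF A(1)]) (simp add: A(2))
          also have "\<dots> = 1" using A(2) prob_space.emeasure_space_1[OF Qprob] by simp
          finally show ?thesis using sp by simp
        qed
        ultimately show False by simp
      qed
      have "emeasure P B \<le> emeasure P ((B - H) \<union> (H - A))"
        by (rule emeasure_mono) (auto simp: B_def H_def)
      also have "\<dots> \<le> emeasure P (B - H) + emeasure P (H - A)"
        by (rule emeasure_subadditive) auto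
      finally have BH: "emeasure P B \<le> emeasure P (B - H)" using null by simp
      have "v h + emeasure P (B - H) = emeasure P (H \<union> (B - H))"
        unfolding v_def H_def[symmetric] by (rule plus_emeasure) auto
      also have "\<dots> \<le> v k" unfolding v_def
        by (rule emeasure_mono) (use ksupp[of 0] ksupp[of 1] in \<open>auto simp: H_def B_def\<close>)
      finally have "v h + emeasure P (B - H) \<le> v k" .
      hence "v h + emeasure P (B - H) \<le> v h" using vk by (rule order_trans)
      hence disj: "v h = \<top> \<or> emeasure P (B - H) = 0" by simp
      moreover have "v h \<noteq> \<top>" unfolding v_def using P.emeasure_finite by simp
      moreover have "0 < emeasure P (B - H)" using Bpos BH by (rule less_le_trans)
      ultimately show False by simp
    qed
    thus ?thesis using QX QXu by blast
  qed
qed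

end
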